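(* Let $A$ be a finite alphabet, $L\subseteq A^*$ and $m\in\mathbb{N}$. If all words in $\min(L)$ have length at most $m$, then ${\uparrow}L$ is $m$-PT while ${\uparrow}_<L$ and $\min(L)$ are $(m+1)$-PT.
   Context: $u\sqsubseteq v$ (subword) means $u=a_1\cdots a_n$ with letters $a_i$ and $v=v_0a_1v_1\cdots a_nv_n$; $u\sqsubset v$ means $u\sqsubseteq v$ and $u\ne v$. ${\uparrow}L=\{v~|~\exists u\in L: u\sqsubseteq v\}$, ${\uparrow}_<L=\{v~|~\exists u\in L: u\sqsubset v\}$, $\min(L)=\{u\in L~|~\forall v\in L: v\not\sqsubset u\}$. $u\sim_n v$ iff $u,v$ have the same subwords of length at most $n$; $L$ is $n$-PT if it is a union of $\sim_n$-classes. *)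

theory Defs
  imports Main "HOL-Library.Sublist"
begin

(* words over alphabet 'a are lists; subword order u \<sqsubseteq> v is library subseq (scattered subword) *)

definition upclosure :: "'a list set \<Rightarrow> 'a list set" where
  "upclosure L = {v. \<exists>u\<in>L. subseq u v}"

definition strict_upclosure :: "'a list set \<Rightarrow> 'a list set" where
  "strict_upclosure L = {v. \<exists>u\<in>L. strict_subseq u v}"

definition minwords :: "'a list set \<Rightarrow> 'a list set" where
  "minwords L = {u\<in>L. \<forall>v\<in>L. \<not> strict_subseq v u}"

definition subwords_upto :: "nat \<Rightarrow> 'a list \<Rightarrow> 'a list set" where
  "subwords_upto n u = {w. length w \<le> n \<and> subseq w u}"

definition simeq :: "nat \<Rightarrow> 'a list \<Rightarrow> 'a list \<Rightarrow> bool" where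
  "simeq n u v \<longleftrightarrow> subwords_upto n u = subwords_upto n v"

definition is_PT :: "nat \<Rightarrow> 'a list set \<Rightarrow> bool" where
  "is_PT n L \<longleftrightarrow> (\<forall>u v. simeq n u v \<longrightarrow> (u \<in> L \<longleftrightarrow> v \<in> L))"

end

theory Submission
  imports Defs
begin

lemma min_below:
  "u \<in> L \<Longrightarrow> \<exists>u0\<in>minwords L. subseq u0 u"
proof (induction "length u" arbitrary: u rule: less_induct)
  case less
  show ?case
  proof (cases "\<exists>v\<in>L. strict_subseq v u")
    case True
    then obtain v where v: "v \<in> L" "strict_subseq v u" by blast
    then have "length v < length u"
      by (metis strict_subseq_def list_emb_length order_le_less subseq_same_length)
    with less v obtain u0 where "u0 \<in> minwords L" "subseq u0 v" by blast
    then show ?thesis using v by (meson strict_subseq_def subseq_order.order_trans)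
  next
    case False
    then show ?thesis using less by (auto simp: minwords_def)
  qed
qed

lemma simeq_sub:
  "simeq n v v' \<Longrightarrow> subseq u v \<Longrightarrow> length u \<le> n \<Longrightarrow> subseq u v'"
  unfolding simeq_def subwords_upto_def by blast

lemma simeq_mono: "simeq (Suc n) v v' \<Longrightarrow> simeq n v v'"
proof -
  assume s: "simeq (Suc n) v v'"
  have "subwords_upto n v = {w \<in> subwords_upto (Suc n) v. length w \<le> n}"
       "subwords_upto n v' = {w \<in> subwords_upto (Suc n) v'. length w \<le> n}"
    unfolding subwords_upto_def by auto
  then show ?thesis using s unfolding simeq_def by simp
qed

lemma strict_step:
  "strict_subseq u v \<Longrightarrow> \<exists>w. subseq u w \<and> subseq w v \<and> length w = Suc (length u)"
proof (induction v arbitrary: u)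
  case Nil
  then show ?case by (auto simp: strict_subseq_def)
next
  case (Cons a v)
  have su: "subseq u (a#v)" and ne: "u \<noteq> a#v" using Cons.prems by (auto simp: strict_subseq_def)
  show ?case
  proof (cases "subseq u v")
    case True
    show ?thesis
    proof (cases "u = v")
      case True then show ?thesis by auto
    next
      case False
      with True Cons.IH[of u] obtain w where "subseq u w" "subseq w v" "length w = Suc (length u)"
        by (auto simp: strict_subseq_def)
      then show ?thesis by auto
    qed
  next
    case False
    with su obtain u' where u: "u = a#u'" "subseq u' v"
      by (cases u) (auto split: if_splits)
    with ne have "u' \<noteq> v" by auto
    with u Cons.IH[of u'] obtain w where "subseq u' w" "subseq w v" "length w = Suc (length u')"
      by (auto simp: strict_subseq_def)
    then show ?thesis using u by (intro exI[of _ "a#w"]) auto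
  qed
qed

lemma up_char:
  assumes "\<forall>u\<in>minwords L. length u \<le> m"
  shows "v \<in> upclosure L \<longleftrightarrow> (\<exists>u\<in>minwords L. subseq u v)"
proof
  assume "v \<in> upclosure L"
  then obtain u where "u \<in> L" "subseq u v" by (auto simp: upclosure_def)
  moreover from \<open>u \<in> L\<close> obtain u0 where "u0 \<in> minwords L" "subseq u0 u" using min_below by blast
  ultimately show "\<exists>u\<in>minwords L. subseq u v" by (meson subseq_order.order_trans)
qed (auto simp: upclosure_def minwords_def)

lemma sup_char:
  shows "v \<in> strict_upclosure L \<longleftrightarrow> (\<exists>u\<in>minwords L. strict_subseq u v)"
proof
  assume "v \<in> strict_upclosure L"
  then obtain u where "u \<in> L" "strict_subseq u v" by (auto simp: strict_upclosure_def)
  moreover from \<open>u \<in> L\<close> obtain u0 where "u0 \<in> minwords L" "subseq u0 u" using min_below by blast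
  ultimately show "\<exists>u\<in>minwords L. strict_subseq u v"
    by (meson subseq_order.le_less_trans)
qed (auto simp: strict_upclosure_def minwords_def)

lemma PT_up:
  assumes A: "\<forall>u\<in>minwords L. length u \<le> m"
  shows "is_PT m (upclosure L)"
  unfolding is_PT_def
proof (intro allI impI)
  fix v v' :: "'a list" assume s: "simeq m v v'"
  then have s': "simeq m v' v" by (simp add: simeq_def)
  show "v \<in> upclosure L \<longleftrightarrow> v' \<in> upclosure L"
    unfolding up_char[OF A] using simeq_sub[OF s] simeq_sub[OF s'] A by blast
qed

lemma PT_sup:
  assumes A: "\<forall>u\<in>minwords L. length u \<le> m"
  shows "is_PT (m+1) (strict_upclosure L)"
proof -
  have key: "v' \<in> strict_upclosure L" if s: "simeq (m+1) v v'" and v: "v \<in> strict_upclosure L" for v v'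
  proof -
    from v obtain u where u: "u \<in> minwords L" "strict_subseq u v" using sup_char by blast
    then obtain w where w: "subseq u w" "subseq w v" "length w = Suc (length u)"
      using strict_step by blast
    have "length w \<le> m+1" using w A u by auto
    then have "subseq w v'" using simeq_sub[OF s w(2)] by simp
    moreover have "strict_subseq u w" using w by (auto simp: strict_subseq_def)
    ultimately have "strict_subseq u v'" by (meson subseq_order.less_le_trans)
    then show ?thesis using u sup_char by blast
  qed
  show ?thesis unfolding is_PT_def
    by (metis key simeq_def)
qed

lemma min_eq: "minwords L = upclosure L - strict_upclosure L"
  unfolding minwords_def upclosure_def strict_upclosure_def strict_subseq_def
  by auto

lemma PT_D: "is_PT n L \<Longrightarrow> simeq n u v \<Longrightarrow> (u \<in> L \<longleftrightarrow> v \<in> L)"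
  unfolding is_PT_def by simp

theorem corollary9:
  fixes L :: "('a::finite) list set" and m :: nat
  assumes "\<forall>u\<in>minwords L. length u \<le> m"
  shows "is_PT m (upclosure L) \<and> is_PT (m + 1) (strict_upclosure L)
         \<and> is_PT (m + 1) (minwords L)"
proof -
  have 1: "is_PT m (upclosure L)" by (rule PT_up[OF assms])
  have 2: "is_PT (m+1) (strict_upclosure L)" by (rule PT_sup[OF assms])
  have h3: "is_PT (m+1) (upclosure L)" unfolding is_PT_def
    proof (intro allI impI)
    fix u v :: "'a list" assume "simeq (m+1) u v"
    then have "simeq m u v" using simeq_mono[of m u v] by simp
    then show "u \<in> upclosure L \<longleftrightarrow> v \<in> upclosure L" by (rule PT_D[OF 1])
  qed
  have h4: "is_PT (m+1) (minwords L)" unfolding is_PT_def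
  proof (intro allI impI)
    fix u v :: "'a list" assume s: "simeq (m+1) u v"
    have a: "u \<in> upclosure L \<longleftrightarrow> v \<in> upclosure L" by (rule PT_D[OF h3 s])
    have b: "u \<in> strict_upclosure L \<longleftrightarrow> v \<in> strict_upclosure L" by (rule PT_D[OF 2 s])
    show "u \<in> minwords L \<longleftrightarrow> v \<in> minwords L" by (simp only: min_eq Diff_iff a b)
  qed
  show ?thesis by (rule conjI[OF 1 conjI[OF 2 h4]])
qed

end
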